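(* Let $(A,E,\langle\!\langle-,-\rangle\!\rangle,\partial,[\![-,-]\!])$ be a double Courant--Dorfman algebra. Then for all $e,f,g\in E$ the following identities hold (Sweedler summation understood): $$\begin{aligned}&[\![e,[\![f,g]\!]''_r]\!]'_l\otimes[\![e,[\![f,g]\!]''_r]\!]''_l\otimes[\![f,g]\!]'_r=\partial[\![e,f]\!]'_r\otimes\langle\!\langle g,[\![e,f]\!]''_r\rangle\!\rangle'\otimes\langle\!\langle g,[\![e,f]\!]''_r\rangle\!\rangle''\\&\qquad+[\![f,[\![e,g]\!]'_l]\!]''_r\otimes[\![e,g]\!]''_l\otimes[\![f,[\![e,g]\!]'_l]\!]'_r-[\![e,f]\!]'_l\otimes\langle\!\langle g,\partial[\![e,f]\!]''_l\rangle\!\rangle'\otimes\langle\!\langle g,\partial[\![e,f]\!]''_l\rangle\!\rangle'',\end{aligned}$$ $$\begin{aligned}&[\![e,[\![f,g]\!]''_r]\!]'_r\otimes[\![e,[\![f,g]\!]''_r]\!]''_r\otimes[\![f,g]\!]'_r=[\![e,f]\!]'_r\otimes\partial\langle\!\langle g,[\![e,f]\!]''_r\rangle\!\rangle'\otimes\langle\!\langle g,[\![e,f]\!]''_r\rangle\!\rangle''\\&\qquad+\langle\!\langle f,\partial[\![e,g]\!]'_r\rangle\!\rangle''\otimes[\![e,g]\!]''_r\otimes\langle\!\langle f,\partial[\![e,g]\!]'_r\rangle\!\rangle'-[\![e,f]\!]'_r\otimes[\![g,[\![e,f]\!]''_r]\!]'_l\otimes[\![g,[\![e,f]\!]''_r]\!]''_l,\end{aligned}$$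 $$\begin{aligned}&\langle\!\langle e,\partial[\![f,g]\!]''_l\rangle\!\rangle'\otimes\langle\!\langle e,\partial[\![f,g]\!]''_l\rangle\!\rangle''\otimes[\![f,g]\!]'_l=[\![e,f]\!]'_r\otimes\langle\!\langle g,[\![e,f]\!]''_r\rangle\!\rangle'\otimes\partial\langle\!\langle g,[\![e,f]\!]''_r\rangle\!\rangle''\\&\qquad+[\![f,[\![e,g]\!]'_l]\!]''_l\otimes[\![e,g]\!]''_l\otimes[\![f,[\![e,g]\!]'_l]\!]'_l-[\![e,f]\!]'_r\otimes[\![g,[\![e,f]\!]''_r]\!]'_r\otimes[\![g,[\![e,f]\!]''_r]\!]''_r.\end{aligned}$$
   Context: All algebras are associative unital $\Bbbk$-algebras, $\Bbbk$ a field of characteristic zero, $\otimes=\otimes_\Bbbk$. Sweedler notation: $x=x'\otimes x''$ with summation suppressed; $(x'\otimes x'')^\sigma=x''\otimes x'$. Outer structure on $A\otimes A$, $E\otimes A$, $A\otimes E$: $a(x'\otimes x'')b=ax'\otimes x''b$; inner structure on $A\otimes A$: $a*(x'\otimes x'')*b=x'b\otimes ax''$. For $x=x'\otimes x''$ and $y$: $x\otimes_1y:=x'\otimes y\otimes x''$, $y\otimes_1x:=x'\otimes y\otimes x''$. $A$ is an algebra, $E$ an $A$-bimodule, $\partial\colon A\to E$ a derivation, acting on $A\otimes A$ by $\partial(x'\otimes x'')=\partial x'\otimes x''+x'\otimes\partial x''$. A pairing $\langle\!\langle-,-\rangle\!\rangle\colon E\otimes E\to A\otimes A$ is linear with $f\mapsto\langle\!\langle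 e,f\rangle\!\rangle$ a bimodule map to $(A\otimes A)_{\mathrm{out}}$ and $f\mapsto\langle\!\langle f,e\rangle\!\rangle$ a bimodule map to $(A\otimes A)_{\mathrm{inn}}$; symmetric: $\langle\!\langle e,f\rangle\!\rangle=\langle\!\langle f,e\rangle\!\rangle^\sigma$. Extensions: $\langle\!\langle e,f\otimes a\rangle\!\rangle_L=\langle\!\langle e,f\rangle\!\rangle\otimes a$, $\langle\!\langle e,a\otimes f\rangle\!\rangle_L=0$, $\langle\!\langle e,a\otimes f\rangle\!\rangle_R=a\otimes\langle\!\langle e,f\rangle\!\rangle$, $\langle\!\langle e,f\otimes a\rangle\!\rangle_R=0$, $\langle\!\langle e\otimes a,f\rangle\!\rangle_L=\langle\!\langle a\otimes e,f\rangle\!\rangle_R=\langle\!\langle e,f\rangle\!\rangle'\otimes a\otimes\langle\!\langle e,f\rangle\!\rangle''$, $\langle\!\langle a\otimes e,f\rangle\!\rangle_L=\langle\!\langle e\otimes a,f\rangle\!\rangle_R=0$. A double Courant--Dorfman bracket is a linear map $[\![-,-]\!]\colon T_AE\otimes T_AE\to T_AE\otimes T_AE$ of degree $-1$ ($T_AE$ the tensor algebra, $E$ in degree 1) with $[\![e,a]\!]=\langle\!\langle e,\partial a\rangle\!\rangle$, $[\![a,e]\!]=-\langle\!\langle\partial a,e\rangle\!\rangle$, $[\![a,b]\!]=0$; for $e,f\in E$, $[\![e,f]\!]=[\![e,f]\!]_l+[\![e,f]\!]_r\in E\otimes A\oplus A\otimes E$ with $[\![e,f]\!]_l=[\![e,f]\!]'_l\otimes[\![e,f]\!]''_l$,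 $[\![e,f]\!]_r=[\![e,f]\!]'_r\otimes[\![e,f]\!]''_r$. Extensions: $[\![e,f\otimes a]\!]_L=[\![e,f]\!]\otimes a$, $[\![e,a\otimes f]\!]_L=\langle\!\langle e,\partial a\rangle\!\rangle\otimes f$, $[\![e,f\otimes a]\!]_R=f\otimes\langle\!\langle e,\partial a\rangle\!\rangle$, $[\![e,a\otimes f]\!]_R=a\otimes[\![e,f]\!]$, $[\![e\otimes a,f]\!]_L=[\![e,f]\!]\otimes_1a+\langle\!\langle e,f\rangle\!\rangle\otimes_1\partial a$, $[\![a\otimes e,f]\!]_L=-\langle\!\langle\partial a,f\rangle\!\rangle\otimes_1e$. A double Courant--Dorfman algebra is $(A,E,\langle\!\langle-,-\rangle\!\rangle,\partial,[\![-,-]\!])$ with symmetric pairing, derivation and double Courant--Dorfman bracket such that for all $a,b\in A$, $e,f,g\in E$: $\partial\langle\!\langle e,f\rangle\!\rangle=[\![e,f]\!]+[\![f,e]\!]^\sigma$; $[\![\partial a,e]\!]=0$; $\langle\!\langle\partial a,\partial b\rangle\!\rangle=0$; $[\![e,fa]\!]=[\![e,f]\!]a+f\langle\!\langle e,\partial a\rangle\!\rangle$; $[\![e,af]\!]=a[\![e,f]\!]+\langle\!\langle e,\partial a\rangle\!\rangle f$; $[\![e,[\![f,g]\!]]\!]_L=[\![f,[\![e,g]\!]]\!]_R+[\![[\![e,f]\!],g]\!]_L$; $\langle\!\langle e,\partial\langle\!\langle f,g\rangle\!\rangle\rangle\!\rangle_L=\langle\!\langle f,[\![e,g]\!]\rangle\!\rangle_R+\langle\!\langle[\![e,f]\!],g\rangle\!\rangle_L$.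 *)

theory Defs
  imports Main
begin

text \<open>
The algebra A is a type 'a of class ring_1 (associative, unital) together with
a structure map iota : k -> A which is a unital ring homomorphism into the centre
(this is exactly a k-algebra structure; k acts on A by c.x = iota c * x).
The A-bimodule E is a type 'e of class ab_group_add with a left action la and a
right action ra; k acts on E through iota (symmetrically).

Tensor products over k are represented by finite formal sums, i.e. lists of pairs
(resp. triples) of pure tensors.  Two such lists denote the same element of the
tensor product iff every k-multilinear form to k takes the same value on them
(over a field the linear functionals separate the points of a tensor product);
this is the relation teq2 / teq3.  Sweedler notation becomes list comprehension.
\<close>

definition scA :: "('k::field \<Rightarrow> 'a::ring_1) \<Rightarrow> 'k \<Rightarrow> 'a \<Rightarrow> 'a" where
  "scA \<iota> c x = \<iota> c * x"

definition scE :: "('k::field \<Rightarrow> 'a::ring_1) \<Rightarrow> ('a \<Rightarrow> 'e \<Rightarrow> 'e) \<Rightarrow> 'k \<Rightarrow> 'e \<Rightarrow> 'e" where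
  "scE \<iota> la c x = la (\<iota> c) x"

definition klin :: "('k::field \<Rightarrow> 'x::ab_group_add \<Rightarrow> 'x) \<Rightarrow> ('x \<Rightarrow> 'k) \<Rightarrow> bool" where
  "klin s f \<longleftrightarrow> (\<forall>x y. f (x + y) = f x + f y) \<and> (\<forall>c x. f (s c x) = c * f x)"

definition kbilin :: "('k::field \<Rightarrow> 'x::ab_group_add \<Rightarrow> 'x) \<Rightarrow> ('k \<Rightarrow> 'y::ab_group_add \<Rightarrow> 'y)
    \<Rightarrow> ('x \<Rightarrow> 'y \<Rightarrow> 'k) \<Rightarrow> bool" where
  "kbilin s1 s2 \<phi> \<longleftrightarrow> (\<forall>y. klin s1 (\<lambda>x. \<phi> x y)) \<and> (\<forall>x. klin s2 (\<lambda>y. \<phi> x y))"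

definition ktrilin :: "('k::field \<Rightarrow> 'x::ab_group_add \<Rightarrow> 'x) \<Rightarrow> ('k \<Rightarrow> 'y::ab_group_add \<Rightarrow> 'y)
    \<Rightarrow> ('k \<Rightarrow> 'z::ab_group_add \<Rightarrow> 'z) \<Rightarrow> ('x \<Rightarrow> 'y \<Rightarrow> 'z \<Rightarrow> 'k) \<Rightarrow> bool" where
  "ktrilin s1 s2 s3 \<phi> \<longleftrightarrow> (\<forall>y z. klin s1 (\<lambda>x. \<phi> x y z)) \<and> (\<forall>x z. klin s2 (\<lambda>y. \<phi> x y z))
      \<and> (\<forall>x y. klin s3 (\<lambda>z. \<phi> x y z))"

definition teq2 :: "('k::field \<Rightarrow> 'x::ab_group_add \<Rightarrow> 'x) \<Rightarrow> ('k \<Rightarrow> 'y::ab_group_add \<Rightarrow> 'y)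
    \<Rightarrow> ('x \<times> 'y) list \<Rightarrow> ('x \<times> 'y) list \<Rightarrow> bool" where
  "teq2 s1 s2 xs ys \<longleftrightarrow> (\<forall>\<phi>. kbilin s1 s2 \<phi> \<longrightarrow>
      sum_list (map (\<lambda>(x, y). \<phi> x y) xs) = sum_list (map (\<lambda>(x, y). \<phi> x y) ys))"

definition teq3 :: "('k::field \<Rightarrow> 'x::ab_group_add \<Rightarrow> 'x) \<Rightarrow> ('k \<Rightarrow> 'y::ab_group_add \<Rightarrow> 'y)
    \<Rightarrow> ('k \<Rightarrow> 'z::ab_group_add \<Rightarrow> 'z) \<Rightarrow> ('x \<times> 'y \<times> 'z) list \<Rightarrow> ('x \<times> 'y \<times> 'z) list \<Rightarrow> bool" where
  "teq3 s1 s2 s3 xs ys \<longleftrightarrow> (\<forall>\<phi>. ktrilin s1 s2 s3 \<phi> \<longrightarrow>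
      sum_list (map (\<lambda>(x, y, z). \<phi> x y z) xs) = sum_list (map (\<lambda>(x, y, z). \<phi> x y z) ys))"

definition k_algebra :: "('k::field_char_0 \<Rightarrow> 'a::ring_1) \<Rightarrow> bool" where
  "k_algebra \<iota> \<longleftrightarrow> \<iota> 1 = 1 \<and> (\<forall>c d. \<iota> (c + d) = \<iota> c + \<iota> d) \<and> (\<forall>c d. \<iota> (c * d) = \<iota> c * \<iota> d)
     \<and> (\<forall>c x. \<iota> c * x = x * \<iota> c)"

definition bimodule :: "('k::field_char_0 \<Rightarrow> 'a::ring_1) \<Rightarrow> ('a \<Rightarrow> 'e::ab_group_add \<Rightarrow> 'e)
    \<Rightarrow> ('e \<Rightarrow> 'a \<Rightarrow> 'e) \<Rightarrow> bool" where
  "bimodule \<iota> la ra \<longleftrightarrow>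
     (\<forall>a b e. la (a * b) e = la a (la b e)) \<and> (\<forall>e. la 1 e = e)
   \<and> (\<forall>a b e. la (a + b) e = la a e + la b e) \<and> (\<forall>a e f. la a (e + f) = la a e + la a f)
   \<and> (\<forall>a b e. ra e (a * b) = ra (ra e a) b) \<and> (\<forall>e. ra e 1 = e)
   \<and> (\<forall>a b e. ra e (a + b) = ra e a + ra e b) \<and> (\<forall>a e f. ra (e + f) a = ra e a + ra f a)
   \<and> (\<forall>a b e. la a (ra e b) = ra (la a e) b)
   \<and> (\<forall>c e. la (\<iota> c) e = ra e (\<iota> c))"

definition derivation :: "('k::field_char_0 \<Rightarrow> 'a::ring_1) \<Rightarrow> ('a \<Rightarrow> 'e::ab_group_add \<Rightarrow> 'e)
    \<Rightarrow> ('e \<Rightarrow> 'a \<Rightarrow> 'e) \<Rightarrow> ('a \<Rightarrow> 'e) \<Rightarrow> bool" where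
  "derivation \<iota> la ra d \<longleftrightarrow>
     (\<forall>a b. d (a + b) = d a + d b) \<and> (\<forall>c a. d (\<iota> c * a) = la (\<iota> c) (d a))
   \<and> (\<forall>a b. d (a * b) = ra (d a) b + la a (d b))"

definition symmetric_pairing :: "('k::field_char_0 \<Rightarrow> 'a::ring_1) \<Rightarrow> ('a \<Rightarrow> 'e::ab_group_add \<Rightarrow> 'e)
    \<Rightarrow> ('e \<Rightarrow> 'a \<Rightarrow> 'e) \<Rightarrow> ('e \<Rightarrow> 'e \<Rightarrow> ('a \<times> 'a) list) \<Rightarrow> bool" where
  "symmetric_pairing \<iota> la ra P \<longleftrightarrow>
     (\<forall>e f g. teq2 (scA \<iota>) (scA \<iota>) (P (e + f) g) (P e g @ P f g))
   \<and> (\<forall>e f g. teq2 (scA \<iota>) (scA \<iota>) (P e (f + g)) (P e f @ P e g))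
   \<and> (\<forall>c e f. teq2 (scA \<iota>) (scA \<iota>) (P (scE \<iota> la c e) f) (map (\<lambda>(x, y). (scA \<iota> c x, y)) (P e f)))
   \<and> (\<forall>c e f. teq2 (scA \<iota>) (scA \<iota>) (P e (scE \<iota> la c f)) (map (\<lambda>(x, y). (scA \<iota> c x, y)) (P e f)))
   \<and> (\<forall>a b e f. teq2 (scA \<iota>) (scA \<iota>) (P e (la a (ra f b))) (map (\<lambda>(x, y). (a * x, y * b)) (P e f)))
   \<and> (\<forall>a b e f. teq2 (scA \<iota>) (scA \<iota>) (P (la a (ra f b)) e) (map (\<lambda>(x, y). (x * b, a * y)) (P f e)))
   \<and> (\<forall>e f. teq2 (scA \<iota>) (scA \<iota>) (P e f) (map (\<lambda>(x, y). (y, x)) (P f e)))"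

text \<open>The restriction of the double Courant--Dorfman bracket to E (x) E, with values
  [[e,f]] = Bl e f + Br e f in E (x) A (+) A (x) E; it is k-bilinear.\<close>
definition bracket_bilinear :: "('k::field_char_0 \<Rightarrow> 'a::ring_1) \<Rightarrow> ('a \<Rightarrow> 'e::ab_group_add \<Rightarrow> 'e)
    \<Rightarrow> ('e \<Rightarrow> 'e \<Rightarrow> ('e \<times> 'a) list) \<Rightarrow> ('e \<Rightarrow> 'e \<Rightarrow> ('a \<times> 'e) list) \<Rightarrow> bool" where
  "bracket_bilinear \<iota> la Bl Br \<longleftrightarrow>
     (\<forall>e f g. teq2 (scE \<iota> la) (scA \<iota>) (Bl (e + f) g) (Bl e g @ Bl f g)
            \<and> teq2 (scA \<iota>) (scE \<iota> la) (Br (e + f) g) (Br e g @ Br f g))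
   \<and> (\<forall>e f g. teq2 (scE \<iota> la) (scA \<iota>) (Bl e (f + g)) (Bl e f @ Bl e g)
            \<and> teq2 (scA \<iota>) (scE \<iota> la) (Br e (f + g)) (Br e f @ Br e g))
   \<and> (\<forall>c e f. teq2 (scE \<iota> la) (scA \<iota>) (Bl (scE \<iota> la c e) f) (map (\<lambda>(x, y). (x, scA \<iota> c y)) (Bl e f))
            \<and> teq2 (scA \<iota>) (scE \<iota> la) (Br (scE \<iota> la c e) f) (map (\<lambda>(x, y). (scA \<iota> c x, y)) (Br e f)))
   \<and> (\<forall>c e f. teq2 (scE \<iota> la) (scA \<iota>) (Bl e (scE \<iota> la c f)) (map (\<lambda>(x, y). (x, scA \<iota> c y)) (Bl e f))
            \<and> teq2 (scA \<iota>) (scE \<iota> la) (Br e (scE \<iota> la c f)) (map (\<lambda>(x, y). (scA \<iota> c x, y)) (Br e f)))"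

text \<open>A double Courant--Dorfman algebra (A, E, P, d, [[-,-]]).  The extensions of the
  bracket and pairing to tensors of degree 2 are unfolded according to the rules
  in the paper.\<close>
definition double_CD_algebra :: "('k::field_char_0 \<Rightarrow> 'a::ring_1) \<Rightarrow> ('a \<Rightarrow> 'e::ab_group_add \<Rightarrow> 'e)
    \<Rightarrow> ('e \<Rightarrow> 'a \<Rightarrow> 'e) \<Rightarrow> ('e \<Rightarrow> 'e \<Rightarrow> ('a \<times> 'a) list) \<Rightarrow> ('a \<Rightarrow> 'e)
    \<Rightarrow> ('e \<Rightarrow> 'e \<Rightarrow> ('e \<times> 'a) list) \<Rightarrow> ('e \<Rightarrow> 'e \<Rightarrow> ('a \<times> 'e) list) \<Rightarrow> bool" where
  "double_CD_algebra \<iota> la ra P d Bl Br \<longleftrightarrow>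
     k_algebra \<iota> \<and> bimodule \<iota> la ra \<and> derivation \<iota> la ra d
   \<and> symmetric_pairing \<iota> la ra P \<and> bracket_bilinear \<iota> la Bl Br
   \<comment> \<open>d<<e,f>> = [[e,f]] + [[f,e]]^sigma\<close>
   \<and> (\<forall>e f. teq2 (scE \<iota> la) (scA \<iota>) (map (\<lambda>(x, y). (d x, y)) (P e f))
                 (Bl e f @ map (\<lambda>(x, y). (y, x)) (Br f e))
          \<and> teq2 (scA \<iota>) (scE \<iota> la) (map (\<lambda>(x, y). (x, d y)) (P e f))
                 (Br e f @ map (\<lambda>(x, y). (y, x)) (Bl f e)))
   \<comment> \<open>[[da, e]] = 0\<close>
   \<and> (\<forall>a e. teq2 (scE \<iota> la) (scA \<iota>) (Bl (d a) e) [] \<and> teq2 (scA \<iota>) (scE \<iota> la) (Br (d a) e) [])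
   \<comment> \<open><<da, db>> = 0\<close>
   \<and> (\<forall>a b. teq2 (scA \<iota>) (scA \<iota>) (P (d a) (d b)) [])
   \<comment> \<open>[[e, f a]] = [[e,f]] a + f <<e, da>>\<close>
   \<and> (\<forall>e f a. teq2 (scE \<iota> la) (scA \<iota>) (Bl e (ra f a))
                 (map (\<lambda>(x, y). (x, y * a)) (Bl e f) @ map (\<lambda>(p1, p2). (ra f p1, p2)) (P e (d a)))
          \<and> teq2 (scA \<iota>) (scE \<iota> la) (Br e (ra f a)) (map (\<lambda>(x, y). (x, ra y a)) (Br e f)))
   \<comment> \<open>[[e, a f]] = a [[e,f]] + <<e, da>> f\<close>
   \<and> (\<forall>e f a. teq2 (scE \<iota> la) (scA \<iota>) (Bl e (la a f)) (map (\<lambda>(x, y). (la a x, y)) (Bl e f))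
          \<and> teq2 (scA \<iota>) (scE \<iota> la) (Br e (la a f))
                 (map (\<lambda>(x, y). (a * x, y)) (Br e f) @ map (\<lambda>(p1, p2). (p1, la p2 f)) (P e (d a))))
   \<comment> \<open>[[e,[[f,g]]]]_L = [[f,[[e,g]]]]_R + [[[[e,f]],g]]_L, componentwise in
       E(x)A(x)A, A(x)E(x)A, A(x)A(x)E\<close>
   \<and> (\<forall>e f g.
        teq3 (scE \<iota> la) (scA \<iota>) (scA \<iota>)
          [(l1, l2, x2). (x1, x2) \<leftarrow> Bl f g, (l1, l2) \<leftarrow> Bl e x1]
          ([(z1, p1, p2). (z1, z2) \<leftarrow> Bl e g, (p1, p2) \<leftarrow> P f (d z2)]
           @ [(l1, u2, l2). (u1, u2) \<leftarrow> Bl e f, (l1, l2) \<leftarrow> Bl u1 g])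
      \<and> teq3 (scA \<iota>) (scE \<iota> la) (scA \<iota>)
          [(r1, r2, x2). (x1, x2) \<leftarrow> Bl f g, (r1, r2) \<leftarrow> Br e x1]
          ([(w1, l1, l2). (w1, w2) \<leftarrow> Br e g, (l1, l2) \<leftarrow> Bl f w2]
           @ [(p1, d u2, p2). (u1, u2) \<leftarrow> Bl e f, (p1, p2) \<leftarrow> P u1 g]
           @ [(- p1, v2, p2). (v1, v2) \<leftarrow> Br e f, (p1, p2) \<leftarrow> P (d v1) g])
      \<and> teq3 (scA \<iota>) (scA \<iota>) (scE \<iota> la)
          [(p1, p2, y2). (y1, y2) \<leftarrow> Br f g, (p1, p2) \<leftarrow> P e (d y1)]
          ([(w1, r1, r2). (w1, w2) \<leftarrow> Br e g, (r1, r2) \<leftarrow> Br f w2]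
           @ [(r1, u2, r2). (u1, u2) \<leftarrow> Bl e f, (r1, r2) \<leftarrow> Br u1 g]))
   \<comment> \<open><<e, d<<f,g>>>>_L = <<f,[[e,g]]>>_R + <<[[e,f]],g>>_L in A(x)A(x)A\<close>
   \<and> (\<forall>e f g.
        teq3 (scA \<iota>) (scA \<iota>) (scA \<iota>)
          [(p1, p2, q2). (q1, q2) \<leftarrow> P f g, (p1, p2) \<leftarrow> P e (d q1)]
          ([(w1, p1, p2). (w1, w2) \<leftarrow> Br e g, (p1, p2) \<leftarrow> P f w2]
           @ [(p1, u2, p2). (u1, u2) \<leftarrow> Bl e f, (p1, p2) \<leftarrow> P u1 g]))"

end

theory Submission
  imports Defs
begin

lemma sum_list_map_concat: "sum_list (map h (concat xss)) = sum_list (map (\<lambda>xs. sum_list (map h xs)) xss)"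
  by (induction xss) auto

lemma sum_list_map_uminus[simp]: "sum_list (map (\<lambda>x. - (f x :: 'b::ab_group_add)) xs) = - sum_list (map f xs)"
  by (induction xs) auto

lemma sum_list_map_mult: "sum_list (map (\<lambda>x. (c::'b::comm_ring) * f x) xs) = c * sum_list (map f xs)"
  by (induction xs) (auto simp: distrib_left)

lemma klin_add: "klin s f \<Longrightarrow> f (x + y) = f x + f y"
  by (simp add: klin_def)
lemma klin_scale: "klin s f \<Longrightarrow> f (s c x) = c * f x"
  by (simp add: klin_def)
lemma klin_zero: "klin s f \<Longrightarrow> f 0 = 0"
  using klin_add[of s f 0 0] by (metis add_cancel_right_right add_0)
lemma klin_neg: "klin s f \<Longrightarrow> f (- x) = - f x"
  using klin_add[of s f x "- x"] klin_zero[of s f] by (simp add: eq_neg_iff_add_eq_0 add.commute)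

lemma ktrilin_1: "ktrilin s1 s2 s3 \<phi> \<Longrightarrow> klin s1 (\<lambda>x. \<phi> x y z)" by (simp add: ktrilin_def)
lemma ktrilin_2: "ktrilin s1 s2 s3 \<phi> \<Longrightarrow> klin s2 (\<lambda>y. \<phi> x y z)" by (simp add: ktrilin_def)
lemma ktrilin_3: "ktrilin s1 s2 s3 \<phi> \<Longrightarrow> klin s3 (\<lambda>z. \<phi> x y z)" by (simp add: ktrilin_def)

lemma ktrilin_cyc: "ktrilin s1 s2 s3 \<phi> \<Longrightarrow> ktrilin s3 s1 s2 (\<lambda>x y z. \<phi> y z x)"
  by (simp add: ktrilin_def)

lemma teq2_D: "teq2 s1 s2 xs ys \<Longrightarrow> kbilin s1 s2 \<psi> \<Longrightarrow>
   (\<Sum>p\<leftarrow>xs. \<psi> (fst p) (snd p)) = (\<Sum>p\<leftarrow>ys. \<psi> (fst p) (snd p))"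
  unfolding teq2_def by (simp add: case_prod_unfold)

lemma teq3_D: "teq3 s1 s2 s3 xs ys \<Longrightarrow> ktrilin s1 s2 s3 \<phi> \<Longrightarrow>
   (\<Sum>p\<leftarrow>xs. \<phi> (fst p) (fst (snd p)) (snd (snd p))) = (\<Sum>p\<leftarrow>ys. \<phi> (fst p) (fst (snd p)) (snd (snd p)))"
  unfolding teq3_def by (simp add: case_prod_unfold)

lemma klin_sum_list: "(\<And>y. klin s (\<lambda>x. F x y)) \<Longrightarrow> klin s (\<lambda>x. \<Sum>y\<leftarrow>L. F x y)"
  by (induction L) (auto simp: klin_def distrib_left)

lemma sum_scale_fst: "(\<And>a b. \<psi> (g a) b = (c::'k::field) * \<psi> a b) \<Longrightarrow>
  (\<Sum>p\<leftarrow>map (\<lambda>(a,b). (g a, b)) L. \<psi> (fst p) (snd p)) = c * (\<Sum>p\<leftarrow>L. \<psi> (fst p) (snd p))"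
  by (induction L) (auto simp: distrib_left)

lemma sum_scale_snd: "(\<And>a b. \<psi> a (g b) = (c::'k::field) * \<psi> a b) \<Longrightarrow>
  (\<Sum>p\<leftarrow>map (\<lambda>(a,b). (a, g b)) L. \<psi> (fst p) (snd p)) = c * (\<Sum>p\<leftarrow>L. \<psi> (fst p) (snd p))"
  by (induction L) (auto simp: distrib_left)

lemma klin_list1:
  assumes "\<And>x y. teq2 s1 s2 (L (x+y)) (L x @ L y)"
    and "\<And>c x. teq2 s1 s2 (L (s c x)) (map (\<lambda>(a,b). (s1 c a, b)) (L x))"
    and b: "kbilin s1 s2 \<psi>"
  shows "klin s (\<lambda>x. \<Sum>p\<leftarrow>L x. \<psi> (fst p) (snd p))"
  unfolding klin_def
proof (intro conjI allI)
  fix x y show "(\<Sum>p\<leftarrow>L (x + y). \<psi> (fst p) (snd p)) = (\<Sum>p\<leftarrow>L x. \<psi> (fst p) (snd p)) + (\<Sum>p\<leftarrow>L y. \<psi> (fst p) (snd p))"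
    using teq2_D[OF assms(1) b] by simp
next
  fix c x
  have "\<And>a b. \<psi> (s1 c a) b = c * \<psi> a b" using b by (simp add: kbilin_def klin_def)
  then show "(\<Sum>p\<leftarrow>L (s c x). \<psi> (fst p) (snd p)) = c * (\<Sum>p\<leftarrow>L x. \<psi> (fst p) (snd p))"
    unfolding teq2_D[OF assms(2) b] by (rule sum_scale_fst)
qed

lemma klin_list2:
  assumes "\<And>x y. teq2 s1 s2 (L (x+y)) (L x @ L y)"
    and "\<And>c x. teq2 s1 s2 (L (s c x)) (map (\<lambda>(a,b). (a, s2 c b)) (L x))"
    and b: "kbilin s1 s2 \<psi>"
  shows "klin s (\<lambda>x. \<Sum>p\<leftarrow>L x. \<psi> (fst p) (snd p))"
  unfolding klin_def
proof (intro conjI allI)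
  fix x y show "(\<Sum>p\<leftarrow>L (x + y). \<psi> (fst p) (snd p)) = (\<Sum>p\<leftarrow>L x. \<psi> (fst p) (snd p)) + (\<Sum>p\<leftarrow>L y. \<psi> (fst p) (snd p))"
    using teq2_D[OF assms(1) b] by simp
next
  fix c x
  have "\<And>a b. \<psi> a (s2 c b) = c * \<psi> a b" using b by (simp add: kbilin_def klin_def)
  then show "(\<Sum>p\<leftarrow>L (s c x). \<psi> (fst p) (snd p)) = c * (\<Sum>p\<leftarrow>L x. \<psi> (fst p) (snd p))"
    unfolding teq2_D[OF assms(2) b] by (rule sum_scale_snd)
qed

lemma lin1:
  fixes B :: "'a::ab_group_add"
  assumes h1: "B = L + D + - E" and h2: "PG = C + E" and h3: "PH = A + D" and h4: "PH = PG"
  shows "L = A + (B - C)"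
proof -
  have "L = B - D + E" using h1 by simp
  moreover have "C = PG - E" using h2 by simp
  moreover have "A = PH - D" using h3 by simp
  ultimately show ?thesis using h4 by simp
qed

locale dcd =
  fixes \<iota> :: "'k::field_char_0 \<Rightarrow> 'a::ring_1"
    and la :: "'a \<Rightarrow> 'e::ab_group_add \<Rightarrow> 'e"
    and ra :: "'e \<Rightarrow> 'a \<Rightarrow> 'e"
    and P :: "'e \<Rightarrow> 'e \<Rightarrow> ('a \<times> 'a) list"
    and d :: "'a \<Rightarrow> 'e"
    and Bl :: "'e \<Rightarrow> 'e \<Rightarrow> ('e \<times> 'a) list"
    and Br :: "'e \<Rightarrow> 'e \<Rightarrow> ('a \<times> 'e) list"
  assumes cd: "double_CD_algebra \<iota> la ra P d Bl Br"
begin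

lemma dadd: "d (a + b) = d a + d b"
  using cd by (simp add: double_CD_algebra_def derivation_def)
lemma dsc0: "d (\<iota> c * a) = la (\<iota> c) (d a)"
  using cd unfolding double_CD_algebra_def derivation_def by (elim conjE allE) assumption
lemma dsc: "d (scA \<iota> c a) = scE \<iota> la c (d a)"
  unfolding scA_def scE_def by (rule dsc0)
lemma Padd1: "teq2 (scA \<iota>) (scA \<iota>) (P (e + f) g) (P e g @ P f g)"
  using cd unfolding double_CD_algebra_def symmetric_pairing_def by (elim conjE allE) assumption
lemma Psc1: "teq2 (scA \<iota>) (scA \<iota>) (P (scE \<iota> la c e) f) (map (\<lambda>(x, y). (scA \<iota> c x, y)) (P e f))"
  using cd unfolding double_CD_algebra_def symmetric_pairing_def by (elim conjE allE) assumption
lemma Psym: "teq2 (scA \<iota>) (scA \<iota>) (P e f) (map (\<lambda>(x, y). (y, x)) (P f e))"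
  using cd unfolding double_CD_algebra_def symmetric_pairing_def by (elim conjE allE) assumption
lemma Bladd1: "teq2 (scE \<iota> la) (scA \<iota>) (Bl (e + f) g) (Bl e g @ Bl f g)"
  using cd unfolding double_CD_algebra_def bracket_bilinear_def by (elim conjE allE) assumption
lemma Bradd1: "teq2 (scA \<iota>) (scE \<iota> la) (Br (e + f) g) (Br e g @ Br f g)"
  using cd unfolding double_CD_algebra_def bracket_bilinear_def by (elim conjE allE) assumption
lemma Blsc1: "teq2 (scE \<iota> la) (scA \<iota>) (Bl (scE \<iota> la c e) f) (map (\<lambda>(x, y). (x, scA \<iota> c y)) (Bl e f))"
  using cd unfolding double_CD_algebra_def bracket_bilinear_def by (elim conjE allE) assumption
lemma Brsc1: "teq2 (scA \<iota>) (scE \<iota> la) (Br (scE \<iota> la c e) f) (map (\<lambda>(x, y). (scA \<iota> c x, y)) (Br e f))"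
  using cd unfolding double_CD_algebra_def bracket_bilinear_def by (elim conjE allE) assumption
lemma dP1: "teq2 (scE \<iota> la) (scA \<iota>) (map (\<lambda>(x, y). (d x, y)) (P e f))
                 (Bl e f @ map (\<lambda>(x, y). (y, x)) (Br f e))"
  using cd unfolding double_CD_algebra_def by (elim conjE allE) assumption
lemma dP2: "teq2 (scA \<iota>) (scE \<iota> la) (map (\<lambda>(x, y). (x, d y)) (P e f))
                 (Br e f @ map (\<lambda>(x, y). (y, x)) (Bl f e))"
  using cd unfolding double_CD_algebra_def by (elim conjE allE) assumption
lemma Bld0: "teq2 (scE \<iota> la) (scA \<iota>) (Bl (d a) e) []"
  using cd unfolding double_CD_algebra_def by (elim conjE allE) assumption
lemma Brd0: "teq2 (scA \<iota>) (scE \<iota> la) (Br (d a) e) []"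
  using cd unfolding double_CD_algebra_def by (elim conjE allE) assumption
lemma J1: "teq3 (scE \<iota> la) (scA \<iota>) (scA \<iota>)
          [(l1, l2, x2). (x1, x2) \<leftarrow> Bl f g, (l1, l2) \<leftarrow> Bl e x1]
          ([(z1, p1, p2). (z1, z2) \<leftarrow> Bl e g, (p1, p2) \<leftarrow> P f (d z2)]
           @ [(l1, u2, l2). (u1, u2) \<leftarrow> Bl e f, (l1, l2) \<leftarrow> Bl u1 g])"
  using cd unfolding double_CD_algebra_def by (elim conjE allE) assumption
lemma J2: "teq3 (scA \<iota>) (scE \<iota> la) (scA \<iota>)
          [(r1, r2, x2). (x1, x2) \<leftarrow> Bl f g, (r1, r2) \<leftarrow> Br e x1]
          ([(w1, l1, l2). (w1, w2) \<leftarrow> Br e g, (l1, l2) \<leftarrow> Bl f w2]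
           @ [(p1, d u2, p2). (u1, u2) \<leftarrow> Bl e f, (p1, p2) \<leftarrow> P u1 g]
           @ [(- p1, v2, p2). (v1, v2) \<leftarrow> Br e f, (p1, p2) \<leftarrow> P (d v1) g])"
  using cd unfolding double_CD_algebra_def by (elim conjE allE) assumption
lemma J3: "teq3 (scA \<iota>) (scA \<iota>) (scE \<iota> la)
          [(p1, p2, y2). (y1, y2) \<leftarrow> Br f g, (p1, p2) \<leftarrow> P e (d y1)]
          ([(w1, r1, r2). (w1, w2) \<leftarrow> Br e g, (r1, r2) \<leftarrow> Br f w2]
           @ [(r1, u2, r2). (u1, u2) \<leftarrow> Bl e f, (r1, r2) \<leftarrow> Br u1 g])"
  using cd unfolding double_CD_algebra_def by (elim conjE allE) assumption

lemma klin_d: "klin (scE \<iota> la) F \<Longrightarrow> klin (scA \<iota>) (\<lambda>a. F (d a))"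
  by (simp add: klin_def dadd dsc)

lemma klin_P1: "kbilin (scA \<iota>) (scA \<iota>) \<psi> \<Longrightarrow> klin (scE \<iota> la) (\<lambda>e. \<Sum>p\<leftarrow>P e g. \<psi> (fst p) (snd p))"
  by (rule klin_list1[where L="\<lambda>e. P e g" and s="scE \<iota> la", OF Padd1 Psc1])
lemma klin_Bl1: "kbilin (scE \<iota> la) (scA \<iota>) \<psi> \<Longrightarrow> klin (scE \<iota> la) (\<lambda>e. \<Sum>p\<leftarrow>Bl e g. \<psi> (fst p) (snd p))"
  by (rule klin_list2[where L="\<lambda>e. Bl e g" and s="scE \<iota> la", OF Bladd1 Blsc1])
lemma klin_Br1: "kbilin (scA \<iota>) (scE \<iota> la) \<psi> \<Longrightarrow> klin (scE \<iota> la) (\<lambda>e. \<Sum>p\<leftarrow>Br e g. \<psi> (fst p) (snd p))"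
  by (rule klin_list1[where L="\<lambda>e. Br e g" and s="scE \<iota> la", OF Bradd1 Brsc1])


lemma comp1: "teq3 (scE \<iota> la) (scA \<iota>) (scA \<iota>)
           [(l1, l2, y1). (y1, y2) \<leftarrow> Br f g, (l1, l2) \<leftarrow> Bl e y2]
           ([(d v1, p1, p2). (v1, v2) \<leftarrow> Br e f, (p1, p2) \<leftarrow> P g v2]
            @ [(r2, z2, r1). (z1, z2) \<leftarrow> Bl e g, (r1, r2) \<leftarrow> Br f z1]
            @ [(u1, - p1, p2). (u1, u2) \<leftarrow> Bl e f, (p1, p2) \<leftarrow> P g (d u2)])"
proof (unfold teq3_def, intro allI impI)
  fix \<phi> :: "'e \<Rightarrow> 'a \<Rightarrow> 'a \<Rightarrow> 'k" assume \<phi>: "ktrilin (scE \<iota> la) (scA \<iota>) (scA \<iota>) \<phi>"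
  have neg2: "\<And>x y z. \<phi> x (- y) z = - \<phi> x y z" using klin_neg[OF ktrilin_2[OF \<phi>]] by simp
  have neg3: "\<And>x y z. \<phi> x y (- z) = - \<phi> x y z" using klin_neg[OF ktrilin_3[OF \<phi>]] by simp
  define G where "G x a = (\<Sum>p\<leftarrow>P (d a) g. \<phi> x (snd p) (fst p))" for x a
  define H where "H a x = (\<Sum>p\<leftarrow>P x g. \<phi> (d a) (snd p) (fst p))" for a x
  have Gbil: "kbilin (scE \<iota> la) (scA \<iota>) G"
    unfolding kbilin_def G_def
  proof (intro conjI allI)
    fix a show "klin (scE \<iota> la) (\<lambda>x. \<Sum>p\<leftarrow>P (d a) g. \<phi> x (snd p) (fst p))"
      by (rule klin_sum_list) (rule ktrilin_1[OF \<phi>])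
  next
    fix x have bb: "kbilin (scA \<iota>) (scA \<iota>) (\<lambda>p1 p2. \<phi> x p2 p1)" using \<phi> by (simp add: kbilin_def ktrilin_def)
    show "klin (scA \<iota>) (\<lambda>a. \<Sum>p\<leftarrow>P (d a) g. \<phi> x (snd p) (fst p))"
      using klin_d[OF klin_P1[OF bb, of g]] by simp
  qed
  have Hbil: "kbilin (scA \<iota>) (scE \<iota> la) H"
    unfolding kbilin_def H_def
  proof (intro conjI allI)
    fix x show "klin (scA \<iota>) (\<lambda>a. \<Sum>p\<leftarrow>P x g. \<phi> (d a) (snd p) (fst p))"
      by (rule klin_sum_list) (rule klin_d[OF ktrilin_1[OF \<phi>]])
  next
    fix a have bb: "kbilin (scA \<iota>) (scA \<iota>) (\<lambda>p1 p2. \<phi> (d a) p2 p1)" using \<phi> by (simp add: kbilin_def ktrilin_def)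
    show "klin (scE \<iota> la) (\<lambda>x. \<Sum>p\<leftarrow>P x g. \<phi> (d a) (snd p) (fst p))"
      using klin_P1[OF bb, of g] by simp
  qed
  have eqG: "(\<Sum>p\<leftarrow>P e f. G (d (fst p)) (snd p)) = (\<Sum>p\<leftarrow>Bl e f. G (fst p) (snd p)) + (\<Sum>p\<leftarrow>Br f e. G (snd p) (fst p))"
    using teq2_D[OF dP1 Gbil] by (simp add: case_prod_unfold o_def)
  have eqH: "(\<Sum>p\<leftarrow>P e f. H (fst p) (d (snd p))) = (\<Sum>p\<leftarrow>Br e f. H (fst p) (snd p)) + (\<Sum>p\<leftarrow>Bl f e. H (snd p) (fst p))"
    using teq2_D[OF dP2 Hbil] by (simp add: case_prod_unfold o_def)
  have GH: "(\<Sum>p\<leftarrow>P e f. H (fst p) (d (snd p))) = (\<Sum>p\<leftarrow>P e f. G (d (fst p)) (snd p))"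
    by (simp add: G_def H_def)
  have J: "(\<Sum>x\<leftarrow>Bl e g. \<Sum>r\<leftarrow>Br f (fst x). \<phi> (snd r) (snd x) (fst r))
     = (\<Sum>x\<leftarrow>Br f g. \<Sum>xa\<leftarrow>Bl e (snd x). \<phi> (fst xa) (snd xa) (fst x))
       + (\<Sum>u\<leftarrow>Bl f e. H (snd u) (fst u)) + - (\<Sum>v\<leftarrow>Br f e. G (snd v) (fst v))"
    using teq3_D[OF J2[of f e g] ktrilin_cyc[OF \<phi>]]
    by (simp add: sum_list_map_concat o_def case_prod_unfold G_def H_def neg3)
  have T1: "(\<Sum>v\<leftarrow>Br e f. \<Sum>p\<leftarrow>P g (snd v). \<phi> (d (fst v)) (fst p) (snd p)) = (\<Sum>v\<leftarrow>Br e f. H (fst v) (snd v))"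
  proof -
    have "\<And>v. (\<Sum>p\<leftarrow>P g (snd v). \<phi> (d (fst v)) (fst p) (snd p)) = H (fst v) (snd v)"
    proof -
      fix v :: "'a \<times> 'e"
      have b: "kbilin (scA \<iota>) (scA \<iota>) (\<lambda>p1 p2. \<phi> (d (fst v)) p1 p2)" using \<phi> by (simp add: kbilin_def ktrilin_def)
      show "(\<Sum>p\<leftarrow>P g (snd v). \<phi> (d (fst v)) (fst p) (snd p)) = H (fst v) (snd v)"
        using teq2_D[OF Psym[of g "snd v"] b] by (simp add: H_def case_prod_unfold o_def)
    qed
    then show ?thesis by simp
  qed
  have T3: "(\<Sum>u\<leftarrow>Bl e f. \<Sum>p\<leftarrow>P g (d (snd u)). \<phi> (fst u) (fst p) (snd p)) = (\<Sum>u\<leftarrow>Bl e f. G (fst u) (snd u))"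
  proof -
    have "\<And>u. (\<Sum>p\<leftarrow>P g (d (snd u)). \<phi> (fst u) (fst p) (snd p)) = G (fst u) (snd u)"
    proof -
      fix u :: "'e \<times> 'a"
      have b: "kbilin (scA \<iota>) (scA \<iota>) (\<lambda>p1 p2. \<phi> (fst u) p1 p2)" using \<phi> by (simp add: kbilin_def ktrilin_def)
      show "(\<Sum>p\<leftarrow>P g (d (snd u)). \<phi> (fst u) (fst p) (snd p)) = G (fst u) (snd u)"
        using teq2_D[OF Psym[of g "d (snd u)"] b] by (simp add: G_def case_prod_unfold o_def)
    qed
    then show ?thesis by simp
  qed
  show "(\<Sum>(x, y, z)\<leftarrow>[(l1, l2, y1). (y1, y2) \<leftarrow> Br f g, (l1, l2) \<leftarrow> Bl e y2]. \<phi> x y z) =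
       (\<Sum>(x, y, z)\<leftarrow>[(d v1, p1, p2). (v1, v2) \<leftarrow> Br e f, (p1, p2) \<leftarrow> P g v2]
            @ [(r2, z2, r1). (z1, z2) \<leftarrow> Bl e g, (r1, r2) \<leftarrow> Br f z1]
            @ [(u1, - p1, p2). (u1, u2) \<leftarrow> Bl e f, (p1, p2) \<leftarrow> P g (d u2)]. \<phi> x y z)"
    apply (simp add: sum_list_map_concat o_def case_prod_unfold neg2 T1 T3)
    by (rule lin1[OF J eqG eqH GH])
qed


lemma comp2: "teq3 (scA \<iota>) (scE \<iota> la) (scA \<iota>)
           [(r1, r2, y1). (y1, y2) \<leftarrow> Br f g, (r1, r2) \<leftarrow> Br e y2]
           ([(v1, d p1, p2). (v1, v2) \<leftarrow> Br e f, (p1, p2) \<leftarrow> P g v2]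
            @ [(p2, w2, p1). (w1, w2) \<leftarrow> Br e g, (p1, p2) \<leftarrow> P f (d w1)]
            @ [(- v1, l1, l2). (v1, v2) \<leftarrow> Br e f, (l1, l2) \<leftarrow> Bl g v2])"
proof (unfold teq3_def, intro allI impI)
  fix \<phi> :: "'a \<Rightarrow> 'e \<Rightarrow> 'a \<Rightarrow> 'k" assume \<phi>: "ktrilin (scA \<iota>) (scE \<iota> la) (scA \<iota>) \<phi>"
  have neg1: "\<And>x y z. \<phi> (- x) y z = - \<phi> x y z" using klin_neg[OF ktrilin_1[OF \<phi>]] by simp
  define K where "K a x = (\<Sum>p\<leftarrow>Br x g. \<phi> a (snd p) (fst p))" for a x
  have Kbil: "kbilin (scA \<iota>) (scE \<iota> la) K"
    unfolding kbilin_def K_def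
  proof (intro conjI allI)
    fix x show "klin (scA \<iota>) (\<lambda>a. \<Sum>p\<leftarrow>Br x g. \<phi> a (snd p) (fst p))"
      by (rule klin_sum_list) (rule ktrilin_1[OF \<phi>])
  next
    fix a have bb: "kbilin (scA \<iota>) (scE \<iota> la) (\<lambda>r1 r2. \<phi> a r2 r1)" using \<phi> by (simp add: kbilin_def ktrilin_def)
    show "klin (scE \<iota> la) (\<lambda>x. \<Sum>p\<leftarrow>Br x g. \<phi> a (snd p) (fst p))"
      using klin_Br1[OF bb, of g] by simp
  qed
  have eqK: "(\<Sum>p\<leftarrow>P e f. K (fst p) (d (snd p))) = (\<Sum>p\<leftarrow>Br e f. K (fst p) (snd p)) + (\<Sum>p\<leftarrow>Bl f e. K (snd p) (fst p))"
    using teq2_D[OF dP2 Kbil] by (simp add: case_prod_unfold o_def)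
  have zero: "(\<Sum>p\<leftarrow>P e f. K (fst p) (d (snd p))) = 0"
  proof -
    have "\<And>a b. K a (d b) = 0"
    proof -
      fix a b
      have bb: "kbilin (scA \<iota>) (scE \<iota> la) (\<lambda>r1 r2. \<phi> a r2 r1)" using \<phi> by (simp add: kbilin_def ktrilin_def)
      show "K a (d b) = 0" using teq2_D[OF Brd0[of b g] bb] by (simp add: K_def)
    qed
    then show ?thesis by simp
  qed
  have J: "(\<Sum>y\<leftarrow>Br e g. \<Sum>p\<leftarrow>P f (d (fst y)). \<phi> (snd p) (snd y) (fst p))
     = (\<Sum>x\<leftarrow>Br f g. \<Sum>xa\<leftarrow>Br e (snd x). \<phi> (fst xa) (snd xa) (fst x))
       + (\<Sum>u\<leftarrow>Bl f e. K (snd u) (fst u))"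
    using teq3_D[OF J3[of f e g] ktrilin_cyc[OF \<phi>]]
    by (simp add: sum_list_map_concat o_def case_prod_unfold K_def)
  have T: "(\<Sum>v\<leftarrow>Br e f. \<Sum>p\<leftarrow>P g (snd v). \<phi> (fst v) (d (fst p)) (snd p))
     = (\<Sum>v\<leftarrow>Br e f. \<Sum>l\<leftarrow>Bl g (snd v). \<phi> (fst v) (fst l) (snd l)) + (\<Sum>v\<leftarrow>Br e f. K (fst v) (snd v))"
  proof -
    have "\<And>v. (\<Sum>p\<leftarrow>P g (snd v). \<phi> (fst v) (d (fst p)) (snd p))
       = (\<Sum>l\<leftarrow>Bl g (snd v). \<phi> (fst v) (fst l) (snd l)) + K (fst v) (snd v)"
    proof -
      fix v :: "'a \<times> 'e"
      have b: "kbilin (scE \<iota> la) (scA \<iota>) (\<lambda>x a. \<phi> (fst v) x a)" using \<phi> by (simp add: kbilin_def ktrilin_def)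
      show "(\<Sum>p\<leftarrow>P g (snd v). \<phi> (fst v) (d (fst p)) (snd p))
       = (\<Sum>l\<leftarrow>Bl g (snd v). \<phi> (fst v) (fst l) (snd l)) + K (fst v) (snd v)"
        using teq2_D[OF dP1[of g "snd v"] b] by (simp add: K_def case_prod_unfold o_def)
    qed
    then show ?thesis by (simp add: sum_list_addf)
  qed
  show "(\<Sum>(x, y, z)\<leftarrow>[(r1, r2, y1). (y1, y2) \<leftarrow> Br f g, (r1, r2) \<leftarrow> Br e y2]. \<phi> x y z) =
       (\<Sum>(x, y, z)\<leftarrow>[(v1, d p1, p2). (v1, v2) \<leftarrow> Br e f, (p1, p2) \<leftarrow> P g v2]
            @ [(p2, w2, p1). (w1, w2) \<leftarrow> Br e g, (p1, p2) \<leftarrow> P f (d w1)]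
            @ [(- v1, l1, l2). (v1, v2) \<leftarrow> Br e f, (l1, l2) \<leftarrow> Bl g v2]. \<phi> x y z)"
    using eqK zero by (simp add: sum_list_map_concat o_def case_prod_unfold neg1 T J)
qed

lemma comp3: "teq3 (scA \<iota>) (scA \<iota>) (scE \<iota> la)
           [(p1, p2, x1). (x1, x2) \<leftarrow> Bl f g, (p1, p2) \<leftarrow> P e (d x2)]
           ([(v1, p1, d p2). (v1, v2) \<leftarrow> Br e f, (p1, p2) \<leftarrow> P g v2]
            @ [(l2, z2, l1). (z1, z2) \<leftarrow> Bl e g, (l1, l2) \<leftarrow> Bl f z1]
            @ [(- v1, r1, r2). (v1, v2) \<leftarrow> Br e f, (r1, r2) \<leftarrow> Br g v2])"
proof (unfold teq3_def, intro allI impI)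
  fix \<phi> :: "'a \<Rightarrow> 'a \<Rightarrow> 'e \<Rightarrow> 'k" assume \<phi>: "ktrilin (scA \<iota>) (scA \<iota>) (scE \<iota> la) \<phi>"
  have neg1: "\<And>x y z. \<phi> (- x) y z = - \<phi> x y z" using klin_neg[OF ktrilin_1[OF \<phi>]] by simp
  define M where "M a x = (\<Sum>p\<leftarrow>Bl x g. \<phi> a (snd p) (fst p))" for a x
  have Mbil: "kbilin (scA \<iota>) (scE \<iota> la) M"
    unfolding kbilin_def M_def
  proof (intro conjI allI)
    fix x show "klin (scA \<iota>) (\<lambda>a. \<Sum>p\<leftarrow>Bl x g. \<phi> a (snd p) (fst p))"
      by (rule klin_sum_list) (rule ktrilin_1[OF \<phi>])
  next
    fix a have bb: "kbilin (scE \<iota> la) (scA \<iota>) (\<lambda>l1 l2. \<phi> a l2 l1)" using \<phi> by (simp add: kbilin_def ktrilin_def)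
    show "klin (scE \<iota> la) (\<lambda>x. \<Sum>p\<leftarrow>Bl x g. \<phi> a (snd p) (fst p))"
      using klin_Bl1[OF bb, of g] by simp
  qed
  have eqM: "(\<Sum>p\<leftarrow>P e f. M (fst p) (d (snd p))) = (\<Sum>p\<leftarrow>Br e f. M (fst p) (snd p)) + (\<Sum>p\<leftarrow>Bl f e. M (snd p) (fst p))"
    using teq2_D[OF dP2 Mbil] by (simp add: case_prod_unfold o_def)
  have zero: "(\<Sum>p\<leftarrow>P e f. M (fst p) (d (snd p))) = 0"
  proof -
    have "\<And>a b. M a (d b) = 0"
    proof -
      fix a b
      have bb: "kbilin (scE \<iota> la) (scA \<iota>) (\<lambda>l1 l2. \<phi> a l2 l1)" using \<phi> by (simp add: kbilin_def ktrilin_def)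
      show "M a (d b) = 0" using teq2_D[OF Bld0[of b g] bb] by (simp add: M_def)
    qed
    then show ?thesis by simp
  qed
  have J: "(\<Sum>x\<leftarrow>Bl e g. \<Sum>l\<leftarrow>Bl f (fst x). \<phi> (snd l) (snd x) (fst l))
     = (\<Sum>x\<leftarrow>Bl f g. \<Sum>xa\<leftarrow>P e (d (snd x)). \<phi> (fst xa) (snd xa) (fst x))
       + (\<Sum>u\<leftarrow>Bl f e. M (snd u) (fst u))"
    using teq3_D[OF J1[of f e g] ktrilin_cyc[OF \<phi>]]
    by (simp add: sum_list_map_concat o_def case_prod_unfold M_def)
  have T: "(\<Sum>v\<leftarrow>Br e f. \<Sum>p\<leftarrow>P g (snd v). \<phi> (fst v) (fst p) (d (snd p)))
     = (\<Sum>v\<leftarrow>Br e f. \<Sum>r\<leftarrow>Br g (snd v). \<phi> (fst v) (fst r) (snd r)) + (\<Sum>v\<leftarrow>Br e f. M (fst v) (snd v))"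
  proof -
    have "\<And>v. (\<Sum>p\<leftarrow>P g (snd v). \<phi> (fst v) (fst p) (d (snd p)))
       = (\<Sum>r\<leftarrow>Br g (snd v). \<phi> (fst v) (fst r) (snd r)) + M (fst v) (snd v)"
    proof -
      fix v :: "'a \<times> 'e"
      have b: "kbilin (scA \<iota>) (scE \<iota> la) (\<lambda>a x. \<phi> (fst v) a x)" using \<phi> by (simp add: kbilin_def ktrilin_def)
      show "(\<Sum>p\<leftarrow>P g (snd v). \<phi> (fst v) (fst p) (d (snd p)))
       = (\<Sum>r\<leftarrow>Br g (snd v). \<phi> (fst v) (fst r) (snd r)) + M (fst v) (snd v)"
        using teq2_D[OF dP2[of g "snd v"] b] by (simp add: M_def case_prod_unfold o_def)
    qed
    then show ?thesis by (simp add: sum_list_addf)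
  qed
  show "(\<Sum>(x, y, z)\<leftarrow>[(p1, p2, x1). (x1, x2) \<leftarrow> Bl f g, (p1, p2) \<leftarrow> P e (d x2)]. \<phi> x y z) =
       (\<Sum>(x, y, z)\<leftarrow>[(v1, p1, d p2). (v1, v2) \<leftarrow> Br e f, (p1, p2) \<leftarrow> P g v2]
            @ [(l2, z2, l1). (z1, z2) \<leftarrow> Bl e g, (l1, l2) \<leftarrow> Bl f z1]
            @ [(- v1, r1, r2). (v1, v2) \<leftarrow> Br e f, (r1, r2) \<leftarrow> Br g v2]. \<phi> x y z)"
    using eqM zero by (simp add: sum_list_map_concat o_def case_prod_unfold neg1 T J)
qed

end

theorem lemmaA2:
  fixes \<iota> :: "'k::field_char_0 \<Rightarrow> 'a::ring_1"
    and la :: "'a \<Rightarrow> 'e::ab_group_add \<Rightarrow> 'e"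
    and ra :: "'e \<Rightarrow> 'a \<Rightarrow> 'e"
    and P :: "'e \<Rightarrow> 'e \<Rightarrow> ('a \<times> 'a) list"
    and d :: "'a \<Rightarrow> 'e"
    and Bl :: "'e \<Rightarrow> 'e \<Rightarrow> ('e \<times> 'a) list"
    and Br :: "'e \<Rightarrow> 'e \<Rightarrow> ('a \<times> 'e) list"
  assumes "double_CD_algebra \<iota> la ra P d Bl Br"
  shows "teq3 (scE \<iota> la) (scA \<iota>) (scA \<iota>)
           [(l1, l2, y1). (y1, y2) \<leftarrow> Br f g, (l1, l2) \<leftarrow> Bl e y2]
           ([(d v1, p1, p2). (v1, v2) \<leftarrow> Br e f, (p1, p2) \<leftarrow> P g v2]
            @ [(r2, z2, r1). (z1, z2) \<leftarrow> Bl e g, (r1, r2) \<leftarrow> Br f z1]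
            @ [(u1, - p1, p2). (u1, u2) \<leftarrow> Bl e f, (p1, p2) \<leftarrow> P g (d u2)])
       \<and> teq3 (scA \<iota>) (scE \<iota> la) (scA \<iota>)
           [(r1, r2, y1). (y1, y2) \<leftarrow> Br f g, (r1, r2) \<leftarrow> Br e y2]
           ([(v1, d p1, p2). (v1, v2) \<leftarrow> Br e f, (p1, p2) \<leftarrow> P g v2]
            @ [(p2, w2, p1). (w1, w2) \<leftarrow> Br e g, (p1, p2) \<leftarrow> P f (d w1)]
            @ [(- v1, l1, l2). (v1, v2) \<leftarrow> Br e f, (l1, l2) \<leftarrow> Bl g v2])
       \<and> teq3 (scA \<iota>) (scA \<iota>) (scE \<iota> la)
           [(p1, p2, x1). (x1, x2) \<leftarrow> Bl f g, (p1, p2) \<leftarrow> P e (d x2)]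
           ([(v1, p1, d p2). (v1, v2) \<leftarrow> Br e f, (p1, p2) \<leftarrow> P g v2]
            @ [(l2, z2, l1). (z1, z2) \<leftarrow> Bl e g, (l1, l2) \<leftarrow> Bl f z1]
            @ [(- v1, r1, r2). (v1, v2) \<leftarrow> Br e f, (r1, r2) \<leftarrow> Br g v2])"
proof -
  interpret dcd \<iota> la ra P d Bl Br by (rule dcd.intro) (rule assms)
  show ?thesis using comp1 comp2 comp3 by blast
qed

end
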